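(* Let $\mathbb{K}$ be a field, $n>1$, and let $a=[a_1,\dots,a_n]\in\mathbb{K}[s]^n$ be a non-zero row vector of degree $d=\max_i\deg(a_i)$. Let $h_1,\dots,h_l$ be a basis of the $\mathbb{K}$-vector space $\mathrm{syz}_d(a)$. Then $\mathrm{syz}(a)=\langle h_1,\dots,h_l\rangle_{\mathbb{K}[s]}$.
   Context: $\mathrm{syz}(a)=\{h\in\mathbb{K}[s]^n \mid a\,h=a_1h_1+\dots+a_nh_n=0\}$ (elements $h$ are column vectors), a $\mathbb{K}[s]$-module. The degree of a polynomial vector is the maximum of the degrees of its entries. $\mathrm{syz}_d(a)=\{h\in\mathbb{K}[s]^n \mid \deg(h)\le d,\ a\,h=0\}$, a finite-dimensional $\mathbb{K}$-vector space. $\langle\cdot\rangle_{\mathbb{K}[s]}$ denotes the $\mathbb{K}[s]$-module generated. *)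

theory Defs
  imports "HOL-Computational_Algebra.Polynomial" "HOL-Library.Cardinality" "HOL-Library.Function_Algebras"
begin

text \<open>Polynomial vectors of length n are modelled as functions from a finite index
type 'n (with CARD('n) = n) into K[s].\<close>

definition pvec_degree :: "('n::finite \<Rightarrow> 'k::field poly) \<Rightarrow> nat" where
  "pvec_degree h = Max (range (\<lambda>i. degree (h i)))"

definition syz :: "('n::finite \<Rightarrow> 'k::field poly) \<Rightarrow> ('n \<Rightarrow> 'k poly) set" where
  "syz a = {h. (\<Sum>i\<in>UNIV. a i * h i) = 0}"

definition syz_d :: "('n::finite \<Rightarrow> 'k::field poly) \<Rightarrow> nat \<Rightarrow> ('n \<Rightarrow> 'k poly) set" where
  "syz_d a d = {h. pvec_degree h \<le> d \<and> (\<Sum>i\<in>UNIV. a i * h i) = 0}"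

definition kscale :: "'k::field \<Rightarrow> ('n \<Rightarrow> 'k poly) \<Rightarrow> ('n \<Rightarrow> 'k poly)" where
  "kscale c v = (\<lambda>i. smult c (v i))"

definition pscale :: "'k::field poly \<Rightarrow> ('n \<Rightarrow> 'k poly) \<Rightarrow> ('n \<Rightarrow> 'k poly)" where
  "pscale p v = (\<lambda>i. p * v i)"

end

theory Submission
  imports Defs
begin

lemma module_kscale: "module (kscale :: 'k::field \<Rightarrow> ('n \<Rightarrow> 'k poly) \<Rightarrow> _)"
  by unfold_locales (auto simp: kscale_def fun_eq_iff smult_add_right smult_add_left)

lemma module_pscale: "module (pscale :: 'k::field poly \<Rightarrow> ('n \<Rightarrow> 'k poly) \<Rightarrow> _)"
  by unfold_locales (auto simp: pscale_def fun_eq_iff algebra_simps)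

lemma pvec_degree_le:
  fixes v :: "'n::finite \<Rightarrow> 'k::field poly"
  shows "pvec_degree v \<le> d \<longleftrightarrow> (\<forall>i. degree (v i) \<le> d)"
  unfolding pvec_degree_def by (subst Max_le_iff) auto

lemma mult_if0: "(x::'a::semiring_0) * (if P then y else 0) = (if P then x * y else 0)"
  "(if P then y else 0) * x = (if P then y * x else 0)"
  by auto

lemma sum_fun_apply: "(sum f A) x = (\<Sum>a\<in>A. f a x)"
  by (induction A rule: infinite_finite_induct) auto

lemma sum_if_const: "(\<Sum>j\<in>A. if P then f j else 0) = (if P then sum f A else 0)"
  by auto

lemma gcd_vec:
  fixes a :: "'n::finite \<Rightarrow> 'k::field poly"
  assumes "a \<noteq> 0"
  shows "\<exists>g u. g \<noteq> 0 \<and> (\<Sum>i\<in>UNIV. u i * a i) = g \<and> (\<forall>i. g dvd a i)"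
proof -
  define P where "P m = (\<exists>u. (\<Sum>i\<in>UNIV. u i * a i) \<noteq> 0 \<and> degree (\<Sum>i\<in>UNIV. u i * a i) = m)" for m
  obtain i0 where i0: "a i0 \<noteq> 0" using assms by (auto simp: fun_eq_iff)
  have "P (degree (a i0))"
    unfolding P_def
    by (rule exI[of _ "\<lambda>j. if j = i0 then 1 else 0"]) (simp add: i0 mult_if0)
  then have "P (LEAST m. P m)" by (rule LeastI)
  then obtain u where u: "(\<Sum>i\<in>UNIV. u i * a i) \<noteq> 0"
    "degree (\<Sum>i\<in>UNIV. u i * a i) = (LEAST m. P m)" unfolding P_def by blast
  define g where "g = (\<Sum>i\<in>UNIV. u i * a i)"
  have "g dvd a i" for i
  proof (rule ccontr)
    assume nd: "\<not> g dvd a i"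
    define v where "v j = (if j = i then 1 else 0) - (a i div g) * u j" for j
    have "(\<Sum>j\<in>UNIV. v j * a j) = a i - (a i div g) * g"
      by (simp add: v_def left_diff_distrib sum_subtractf g_def sum_distrib_left sum_distrib_right mult_if0 algebra_simps)
    also have "\<dots> = a i mod g" by (simp add: mod_div_mult_eq minus_div_mult_eq_mod)
    finally have eq: "(\<Sum>j\<in>UNIV. v j * a j) = a i mod g" .
    have ne: "a i mod g \<noteq> 0" using nd by (simp add: dvd_eq_mod_eq_0)
    have "degree (a i mod g) < degree g" using degree_mod_less[of g "a i"] ne u(1) g_def by auto
    moreover have "P (degree (a i mod g))" unfolding P_def using eq ne by metis
    then have "(LEAST m. P m) \<le> degree (a i mod g)" by (rule Least_le)
    ultimately show False using u(2) g_def by simp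
  qed
  then show ?thesis using u(1) g_def by blast
qed

theorem lemma2:
  fixes a :: "'n::finite \<Rightarrow> 'k::field poly"
    and h :: "nat \<Rightarrow> ('n \<Rightarrow> 'k poly)"
    and l d :: nat
  assumes "CARD('n) > 1"
    and "a \<noteq> 0"
    and "d = pvec_degree a"
    and "inj_on h {..<l}"
    and "h ` {..<l} \<subseteq> syz_d a d"
    and "\<not> module.dependent kscale (h ` {..<l})"
    and "module.span kscale (h ` {..<l}) = syz_d a d"
  shows "syz a = module.span pscale (h ` {..<l})"
proof -
  interpret K: module "kscale :: 'k \<Rightarrow> ('n \<Rightarrow> 'k poly) \<Rightarrow> _" by (rule module_kscale)
  interpret P: module "pscale :: 'k poly \<Rightarrow> ('n \<Rightarrow> 'k poly) \<Rightarrow> _" by (rule module_pscale)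
  let ?H = "h ` {..<l}"
  have Psub: "K.subspace (P.span ?H)"
    unfolding K.subspace_def
  proof (intro conjI ballI allI)
    show "0 \<in> P.span ?H" by (rule P.span_zero)
    show "x + y \<in> P.span ?H" if "x \<in> P.span ?H" "y \<in> P.span ?H" for x y
      using that by (rule P.span_add)
    show "kscale c x \<in> P.span ?H" if "x \<in> P.span ?H" for c x
    proof -
      have "kscale c x = pscale [:c:] x" by (simp add: kscale_def pscale_def fun_eq_iff)
      then show ?thesis using P.span_scale[OF that] by simp
    qed
  qed
  have KP: "syz_d a d \<subseteq> P.span ?H"
    using K.span_minimal[OF P.span_superset Psub] assms(7) by simp
  have syz_sub: "P.subspace (syz a)"
    unfolding P.subspace_def syz_def
  proof (intro conjI ballI allI; clarsimp simp: pscale_def)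
    fix x y assume "(\<Sum>i\<in>UNIV. a i * x i) = 0" "(\<Sum>i\<in>UNIV. a i * y i) = 0"
    then show "(\<Sum>i\<in>UNIV. a i * (x i + y i)) = 0" by (simp add: distrib_left sum.distrib)
  next
    fix c x assume "(\<Sum>i\<in>UNIV. a i * x i) = 0"
    then have "c * (\<Sum>i\<in>UNIV. a i * x i) = 0" by simp
    then show "(\<Sum>i\<in>UNIV. a i * (c * x i)) = 0" by (simp add: sum_distrib_left algebra_simps)
  qed
  have "P.span ?H \<subseteq> syz a"
    using assms(5) by (intro P.span_minimal[OF _ syz_sub]) (auto simp: syz_d_def syz_def)
  moreover have "syz a \<subseteq> P.span ?H"
  proof
    fix x assume x: "x \<in> syz a"
    obtain g u where g: "g \<noteq> 0" "(\<Sum>i\<in>UNIV. u i * a i) = g" "\<And>i. g dvd a i"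
      using gcd_vec[OF assms(2)] by blast
    define b where "b i = a i div g" for i
    have ab: "a i = g * b i" for i using g(3)[of i] by (simp add: b_def)
    have "g * (\<Sum>i\<in>UNIV. u i * b i) = g * 1"
      using g(2) by (simp add: ab sum_distrib_left algebra_simps)
    then have ub: "(\<Sum>i\<in>UNIV. u i * b i) = 1" using g(1) by simp
    have "g * (\<Sum>i\<in>UNIV. b i * x i) = 0"
      using x by (simp add: syz_def ab sum_distrib_left algebra_simps)
    then have bx: "(\<Sum>i\<in>UNIV. b i * x i) = 0" using g(1) by simp
    have degb: "degree (b i) \<le> d" for i
    proof (cases "b i = 0")
      case False
      have "degree (b i) \<le> degree (a i)" using ab[of i] False g(1) by (simp add: degree_mult_eq)
      also have "\<dots> \<le> d" using assms(3) pvec_degree_le[of a "pvec_degree a"] by auto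
      finally show ?thesis .
    qed simp
    define K where "K i j = (\<lambda>k. (if k = j then b i else 0) - (if k = i then b j else 0))" for i j
    have Ksyz: "K i j \<in> syz_d a d" for i j
    proof -
      have "pvec_degree (K i j) \<le> d"
        unfolding pvec_degree_le K_def
        using degb by (auto intro: degree_diff_le)
      moreover have "(\<Sum>k\<in>UNIV. a k * K i j k) = 0"
        by (simp add: K_def right_diff_distrib sum_subtractf mult_if0 ab)
      ultimately show ?thesis by (simp add: syz_d_def)
    qed
    have eq: "x = (\<Sum>i\<in>UNIV. \<Sum>j\<in>UNIV. pscale (u i * x j) (K i j))"
    proof (rule ext)
      fix k
      have "(\<Sum>i\<in>UNIV. \<Sum>j\<in>UNIV. pscale (u i * x j) (K i j)) k
          = (\<Sum>i\<in>UNIV. \<Sum>j\<in>UNIV. u i * x j * K i j k)"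
        by (simp add: pscale_def sum_fun_apply)
      also have "\<dots> = (\<Sum>i\<in>UNIV. u i * b i) * x k - u k * (\<Sum>j\<in>UNIV. b j * x j)"
        by (simp add: K_def right_diff_distrib sum_subtractf mult_if0 sum_distrib_left
            sum_distrib_right algebra_simps sum_if_const)
      also have "\<dots> = x k" by (simp add: ub bx)
      finally show "x k = (\<Sum>i\<in>UNIV. \<Sum>j\<in>UNIV. pscale (u i * x j) (K i j)) k" by simp
    qed
    show "x \<in> P.span ?H"
      by (subst eq, intro P.span_sum P.span_scale) (use KP Ksyz in blast)
  qed
  ultimately show ?thesis by blast
qed

end
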